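(* In the standing setup, $$\sum_{i\in\mathcal{N}}\mathrm{len}(\rho^i_{\mathrm{up}})\le 4n^2\qquad\text{and}\qquad\sum_{i\in\mathcal{N}}\mathrm{len}(\rho^i_{\mathrm{down}})\le 4n^2.$$
   Context: $\mathbb{N}=\{0,1,2,\dots\}$. A one-counter system (OCS) $\mathcal{O}$ consists of a finite set $Q$ of states, a set $T_{>0}\subseteq Q\times\{-1,0,1\}\times Q$ of non-zero transitions and a set $T_{=0}\subseteq Q\times\{0,1\}\times Q$ of zero tests. A configuration is a pair $(q,c)\in Q\times\mathbb{N}$ (state $q$, counter value $c$). A transition $t=(p,d,q)$ has source $p$, target $q$, effect $d$; it can be fired in $(p,c)$ if either $t\in T_{>0}$ and $c>0$, or $t\in T_{=0}$ and $c=0$, yielding $(q,c+d)$. A path is a sequence $(\gamma_1,t_1)\cdots(\gamma_m,t_m)$ such that, with some $\gamma_{m+1}$, firing $t_i$ in $\gamma_i$ yields $\gamma_{i+1}$ for all $i\le m$; its source is $\gamma_1$, target $\gamma_{m+1}$, length $\mathrm{len}=m$, configurations appearing on it are $\gamma_1,\dots,\gamma_{m+1}$, intermediate ones are $\gamma_2,\dots,\gamma_m$; its projection is $\mathrm{proj}=t_1\cdots t_m$ and its effect $\mathrm{eff}$ is the sum of the effects of its transitions. A sequence of transitions is consistent if each transition's target is the next one's source. A cycle is a consistent sequence of non-zero transitions starting and ending in the same state (its base state); positive/negative if its effect is positive/negative; simple if no state is visited twice except the base at start and end. The transition multigraph $G$ has vertices $Q$ and an edge $p\to q$ labelled $d$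 for each $(p,d,q)\in T_{>0}$; $\mathfrak{S}$ is the set of its SCCs and $n_S$ the number of states in $S\in\mathfrak{S}$. A cycle is contained in $S$ if all its states lie in $S$; $S$ is positively (negatively) enabled if it contains a positive (negative) cycle. For every positively enabled $S$ a simple positive cycle $\sigma^+_S$ contained in $S$ is fixed, and for every negatively enabled $T$ a simple negative cycle $\sigma^-_T$ contained in $T$. An arc is a path whose source and target have counter value $0$ and whose intermediate configurations have positive counter value. A path is low if all configurations appearing on it have counter value $<5n$, where $n=|Q|$. For $S,T\in\mathfrak{S}$, an arc $\rho$ is $(S,T)$-normal if $\rho=\rho_{\mathrm{pref}}\rho_{\mathrm{up}}\rho_{\mathrm{cap}}\rho_{\mathrm{down}}\rho_{\mathrm{suff}}$ (normal decomposition) with $\rho_{\mathrm{pref}},\rho_{\mathrm{suff}}$ low, $\mathrm{proj}(\rho_{\mathrm{up}})=(\sigma^+_S)^a$, $\mathrm{proj}(\rho_{\mathrm{down}})=(\sigma^-_T)^b$ for some $a,b\in\mathbb{N}$, the source of $\rho_{\mathrm{cap}}$ having the base state of $\sigma^+_S$ and its target the base state of $\sigma^-_T$. Writing $A=\mathrm{eff}(\sigma^+_S)$, $B=-\mathrm{eff}(\sigma^-_T)$, such a decomposition is good if: (iii) $aA\le 2\,\mathrm{len}(\rho_{\mathrm{cap}})+2\,\mathrm{lcm}(A,B)$; (iv) $bB\le 2\,\mathrm{len}(\rho_{\mathrm{cap}})+2\,\mathrm{lcm}(A,B)$; (v) no infix of $\mathrm{proj}(\rho_{\mathrm{cap}})$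 is a cycle with effect divisible by $\gcd(A,B)$; (vi) the target of $\rho_{\mathrm{up}}$ and the source of $\rho_{\mathrm{down}}$ have counter values $>n$; (vii) all configurations appearing on $\rho_{\mathrm{pref}}$ and $\rho_{\mathrm{suff}}$ together are pairwise distinct. Standing setup: $\alpha,\beta$ are configurations with counter value $0$; $\rho=\rho^1\rho^2\cdots\rho^k$ is a path from $\alpha$ to $\beta$ that has the minimum possible number of appearing configurations with counter value $0$ among all paths from $\alpha$ to $\beta$; each $\rho^i$ is an arc; $\{1,\dots,k\}=\mathcal{L}\sqcup\mathcal{N}$ where for $i\in\mathcal{L}$, $\rho^i$ is a low arc of minimum length among all low arcs with the same source and target, and for $i\in\mathcal{N}$, $\rho^i$ is $(S_i,T_i)$-normal for some $S_i,T_i\in\mathfrak{S}$ with a fixed good normal decomposition $\rho^i=\rho^i_{\mathrm{pref}}\rho^i_{\mathrm{up}}\rho^i_{\mathrm{cap}}\rho^i_{\mathrm{down}}\rho^i_{\mathrm{suff}}$. For $S,T\in\mathfrak{S}$: $\mathcal{N}_{(S,T)}=\{i\in\mathcal{N}: (S_i,T_i)=(S,T)\}$, $\mathcal{N}_{(S,\cdot)}=\{i\in\mathcal{N}:S_i=S\}$, $\mathcal{N}_{(\cdot,T)}=\{i\in\mathcal{N}:T_i=T\}$. *)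

theory Defs
  imports Main
begin

type_synonym 'q conf = "'q \<times> nat"
type_synonym 'q trans = "'q \<times> int \<times> 'q"
(* a path: its source configuration and the list of (transition, resulting configuration) *)
type_synonym 'q path = "'q conf \<times> ('q trans \<times> 'q conf) list"

definition ocs :: "'q set \<Rightarrow> 'q trans set \<Rightarrow> 'q trans set \<Rightarrow> bool" where
  "ocs Q Tp Tz \<longleftrightarrow> finite Q \<and> Tp \<subseteq> Q \<times> {-1,0,1} \<times> Q \<and> Tz \<subseteq> Q \<times> {0,1} \<times> Q"

definition tsrc :: "'q trans \<Rightarrow> 'q" where "tsrc t = fst t"
definition teff :: "'q trans \<Rightarrow> int" where "teff t = fst (snd t)"
definition ttgt :: "'q trans \<Rightarrow> 'q" where "ttgt t = snd (snd t)"

definition fires :: "'q trans set \<Rightarrow> 'q trans set \<Rightarrow> 'q trans \<Rightarrow> 'q conf \<Rightarrow> 'q conf \<Rightarrow> bool" where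
  "fires Tp Tz t \<gamma> \<gamma>' \<longleftrightarrow> fst \<gamma> = tsrc t \<and> ((t \<in> Tp \<and> snd \<gamma> > 0) \<or> (t \<in> Tz \<and> snd \<gamma> = 0))
     \<and> fst \<gamma>' = ttgt t \<and> int (snd \<gamma>') = int (snd \<gamma>) + teff t"

definition psrc :: "'q path \<Rightarrow> 'q conf" where "psrc \<rho> = fst \<rho>"
definition pconfs :: "'q path \<Rightarrow> 'q conf list" where "pconfs \<rho> = fst \<rho> # map snd (snd \<rho>)"
definition ptgt :: "'q path \<Rightarrow> 'q conf" where "ptgt \<rho> = last (pconfs \<rho>)"
definition plen :: "'q path \<Rightarrow> nat" where "plen \<rho> = length (snd \<rho>)"
definition proj :: "'q path \<Rightarrow> 'q trans list" where "proj \<rho> = map fst (snd \<rho>)"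
definition eff :: "'q trans list \<Rightarrow> int" where "eff ts = sum_list (map teff ts)"

definition is_path :: "'q trans set \<Rightarrow> 'q trans set \<Rightarrow> 'q path \<Rightarrow> bool" where
  "is_path Tp Tz \<rho> \<longleftrightarrow> (\<forall>i < plen \<rho>. fires Tp Tz (proj \<rho> ! i) (pconfs \<rho> ! i) (pconfs \<rho> ! Suc i))"

definition zeros :: "'q path \<Rightarrow> nat" where
  "zeros \<rho> = length (filter (\<lambda>c. snd c = 0) (pconfs \<rho>))"

definition is_arc :: "'q trans set \<Rightarrow> 'q trans set \<Rightarrow> 'q path \<Rightarrow> bool" where
  "is_arc Tp Tz \<rho> \<longleftrightarrow> is_path Tp Tz \<rho> \<and> plen \<rho> > 0 \<and> snd (psrc \<rho>) = 0 \<and> snd (ptgt \<rho>) = 0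
     \<and> (\<forall>j. 0 < j \<and> j < plen \<rho> \<longrightarrow> snd (pconfs \<rho> ! j) > 0)"

definition low :: "'q set \<Rightarrow> 'q path \<Rightarrow> bool" where
  "low Q \<rho> \<longleftrightarrow> (\<forall>c \<in> set (pconfs \<rho>). snd c < 5 * card Q)"

definition consistent :: "'q trans list \<Rightarrow> bool" where
  "consistent ts \<longleftrightarrow> (\<forall>i. Suc i < length ts \<longrightarrow> ttgt (ts ! i) = tsrc (ts ! Suc i))"

definition is_cycle :: "'q trans set \<Rightarrow> 'q trans list \<Rightarrow> bool" where
  "is_cycle Tp ts \<longleftrightarrow> ts \<noteq> [] \<and> set ts \<subseteq> Tp \<and> consistent ts \<and> ttgt (last ts) = tsrc (hd ts)"

definition simple_cycle :: "'q trans set \<Rightarrow> 'q trans list \<Rightarrow> bool" where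
  "simple_cycle Tp ts \<longleftrightarrow> is_cycle Tp ts \<and> distinct (map tsrc ts)"

definition base :: "'q trans list \<Rightarrow> 'q" where "base ts = tsrc (hd ts)"

definition contained :: "'q trans list \<Rightarrow> 'q set \<Rightarrow> bool" where
  "contained ts S \<longleftrightarrow> set (map tsrc ts) \<subseteq> S \<and> set (map ttgt ts) \<subseteq> S"

definition gedge :: "'q trans set \<Rightarrow> ('q \<times> 'q) set" where
  "gedge Tp = {(p, q). \<exists>d. (p, d, q) \<in> Tp}"

definition SCCs :: "'q set \<Rightarrow> 'q trans set \<Rightarrow> 'q set set" where
  "SCCs Q Tp = {S. \<exists>q \<in> Q. S = {p \<in> Q. (q, p) \<in> (gedge Tp)\<^sup>* \<and> (p, q) \<in> (gedge Tp)\<^sup>*}}"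

definition pos_enabled :: "'q trans set \<Rightarrow> 'q set \<Rightarrow> bool" where
  "pos_enabled Tp S \<longleftrightarrow> (\<exists>c. is_cycle Tp c \<and> contained c S \<and> eff c > 0)"

definition neg_enabled :: "'q trans set \<Rightarrow> 'q set \<Rightarrow> bool" where
  "neg_enabled Tp S \<longleftrightarrow> (\<exists>c. is_cycle Tp c \<and> contained c S \<and> eff c < 0)"

definition sigma_ok :: "'q set \<Rightarrow> 'q trans set \<Rightarrow> ('q set \<Rightarrow> 'q trans list) \<Rightarrow> ('q set \<Rightarrow> 'q trans list) \<Rightarrow> bool" where
  "sigma_ok Q Tp sp sm \<longleftrightarrow> (\<forall>S \<in> SCCs Q Tp.
     (pos_enabled Tp S \<longrightarrow> simple_cycle Tp (sp S) \<and> contained (sp S) S \<and> eff (sp S) > 0) \<and>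
     (neg_enabled Tp S \<longrightarrow> simple_cycle Tp (sm S) \<and> contained (sm S) S \<and> eff (sm S) < 0))"

definition normal_decomp ::
  "'q set \<Rightarrow> 'q trans set \<Rightarrow> 'q trans set \<Rightarrow> ('q set \<Rightarrow> 'q trans list) \<Rightarrow> ('q set \<Rightarrow> 'q trans list)
   \<Rightarrow> 'q set \<Rightarrow> 'q set \<Rightarrow> 'q path
   \<Rightarrow> 'q path \<Rightarrow> 'q path \<Rightarrow> 'q path \<Rightarrow> 'q path \<Rightarrow> 'q path \<Rightarrow> nat \<Rightarrow> nat \<Rightarrow> bool" where
  "normal_decomp Q Tp Tz sp sm S T \<rho> pre up cap down suf a b \<longleftrightarrow>
     S \<in> SCCs Q Tp \<and> T \<in> SCCs Q Tp \<and> pos_enabled Tp S \<and> neg_enabled Tp T \<and>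
     is_path Tp Tz pre \<and> is_path Tp Tz up \<and> is_path Tp Tz cap \<and> is_path Tp Tz down \<and> is_path Tp Tz suf \<and>
     ptgt pre = psrc up \<and> ptgt up = psrc cap \<and> ptgt cap = psrc down \<and> ptgt down = psrc suf \<and>
     \<rho> = (psrc pre, snd pre @ snd up @ snd cap @ snd down @ snd suf) \<and>
     low Q pre \<and> low Q suf \<and>
     proj up = concat (replicate a (sp S)) \<and> proj down = concat (replicate b (sm T)) \<and>
     fst (psrc cap) = base (sp S) \<and> fst (ptgt cap) = base (sm T)"

definition good_decomp ::
  "'q set \<Rightarrow> 'q trans set \<Rightarrow> 'q trans set \<Rightarrow> ('q set \<Rightarrow> 'q trans list) \<Rightarrow> ('q set \<Rightarrow> 'q trans list)
   \<Rightarrow> 'q set \<Rightarrow> 'q set \<Rightarrow> 'q path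
   \<Rightarrow> 'q path \<Rightarrow> 'q path \<Rightarrow> 'q path \<Rightarrow> 'q path \<Rightarrow> 'q path \<Rightarrow> nat \<Rightarrow> nat \<Rightarrow> bool" where
  "good_decomp Q Tp Tz sp sm S T \<rho> pre up cap down suf a b \<longleftrightarrow>
     normal_decomp Q Tp Tz sp sm S T \<rho> pre up cap down suf a b \<and>
     (let A = eff (sp S); B = - eff (sm T) in
       int a * A \<le> 2 * int (plen cap) + 2 * lcm A B \<and>
       int b * B \<le> 2 * int (plen cap) + 2 * lcm A B \<and>
       \<not> (\<exists>xs c ys. proj cap = xs @ c @ ys \<and> is_cycle Tp c \<and> gcd A B dvd eff c)) \<and>
     snd (ptgt up) > card Q \<and> snd (psrc down) > card Q \<and>
     distinct (pconfs pre @ pconfs suf)"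

end

theory Submission
  imports Defs
begin


definition endc :: "'q conf \<Rightarrow> ('q trans \<times> 'q conf) list \<Rightarrow> 'q conf" where
  "endc c xs = last (c # map snd xs)"

fun okp :: "'q trans set \<Rightarrow> 'q trans set \<Rightarrow> 'q conf \<Rightarrow> ('q trans \<times> 'q conf) list \<Rightarrow> bool" where
  "okp Tp Tz c [] = True"
| "okp Tp Tz c (s # xs) = (fires Tp Tz (fst s) c (snd s) \<and> okp Tp Tz (snd s) xs)"

definition zc :: "('q trans \<times> 'q conf) list \<Rightarrow> nat" where
  "zc xs = length (filter (\<lambda>s. snd (snd s) = 0) xs)"

lemma endc_Nil[simp]: "endc c [] = c" by (simp add: endc_def)
lemma endc_Cons[simp]: "endc c (s#xs) = endc (snd s) xs" by (simp add: endc_def)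
lemma endc_append: "endc c (xs @ ys) = endc (endc c xs) ys"
  by (induction xs arbitrary: c) auto
lemma okp_append: "okp Tp Tz c (xs @ ys) = (okp Tp Tz c xs \<and> okp Tp Tz (endc c xs) ys)"
  by (induction xs arbitrary: c) auto
lemma zc_append[simp]: "zc (xs @ ys) = zc xs + zc ys" by (simp add: zc_def)
lemma zeros_eq: "zeros (c, xs) = (if snd c = 0 then 1 else 0) + zc xs"
  by (simp add: zeros_def pconfs_def zc_def filter_map comp_def)
lemma ptgt_eq: "ptgt \<rho> = endc (psrc \<rho>) (snd \<rho>)"
  by (simp add: ptgt_def pconfs_def endc_def psrc_def)

lemma is_path_okp: "is_path Tp Tz (c, xs) = okp Tp Tz c xs"
proof (induction xs arbitrary: c)
  case Nil
  then show ?case by (simp add: is_path_def plen_def)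
next
  case (Cons s xs)
  have "is_path Tp Tz (c, s # xs) = (fires Tp Tz (fst s) c (snd s) \<and> is_path Tp Tz (snd s, xs))"
    unfolding is_path_def plen_def proj_def pconfs_def
    by (simp add: All_less_Suc2)
  then show ?case using Cons by simp
qed

fun rr :: "'q trans set \<Rightarrow> 'q \<Rightarrow> int \<Rightarrow> 'q trans list \<Rightarrow> bool" where
  "rr Tp q c [] = (c > 0)"
| "rr Tp q c (t # ts) = (t \<in> Tp \<and> tsrc t = q \<and> c > 0 \<and> rr Tp (ttgt t) (c + teff t) ts)"

fun endq :: "'q \<Rightarrow> 'q trans list \<Rightarrow> 'q" where
  "endq q [] = q" | "endq q (t # ts) = endq (ttgt t) ts"

lemma eff_Nil[simp]: "eff [] = 0" by (simp add: eff_def)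
lemma eff_Cons[simp]: "eff (t#ts) = teff t + eff ts" by (simp add: eff_def)
lemma eff_append[simp]: "eff (xs@ys) = eff xs + eff ys" by (simp add: eff_def)
lemma endq_append: "endq q (xs@ys) = endq (endq q xs) ys"
  by (induction xs arbitrary: q) auto
lemma endq_last: "ts \<noteq> [] \<Longrightarrow> endq q ts = ttgt (last ts)"
  by (induction ts arbitrary: q) (auto simp: neq_Nil_conv)
lemma endq_in: "endq q ts \<in> insert q (ttgt ` set ts)"
  by (induction ts arbitrary: q) auto

lemma rr_pos: "rr Tp q c ts \<Longrightarrow> c > 0" by (cases ts) auto

lemma rr_append: "rr Tp q c (xs @ ys) = (rr Tp q c xs \<and> rr Tp (endq q xs) (c + eff xs) ys)"
  by (induction xs arbitrary: q c) (auto simp: add.assoc dest: rr_pos)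

lemma rr_mono: "rr Tp q c ts \<Longrightarrow> c \<le> d \<Longrightarrow> rr Tp q d ts"
  by (induction ts arbitrary: q c d) force+

lemma consistent_Cons: "consistent (t # ts) = ((ts \<noteq> [] \<longrightarrow> ttgt t = tsrc (hd ts)) \<and> consistent ts)"
proof -
  have "consistent (t # ts) = ((ts \<noteq> [] \<longrightarrow> ttgt t = tsrc (ts ! 0)) \<and> (\<forall>i. Suc i < length ts \<longrightarrow> ttgt (ts ! i) = tsrc (ts ! Suc i)))"
    unfolding consistent_def
    apply (rule iffI)
     apply (intro conjI impI allI)
      apply (drule spec[of _ 0]; simp)
     apply (drule_tac x="Suc i" in spec; simp)
    apply (intro allI impI)
    subgoal for i by (cases i) auto
    done
  then show ?thesis by (simp add: consistent_def hd_conv_nth)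
qed

lemma rr_props: "rr Tp q c ts \<Longrightarrow> consistent ts \<and> set ts \<subseteq> Tp \<and> (ts \<noteq> [] \<longrightarrow> tsrc (hd ts) = q)"
proof (induction ts arbitrary: q c)
  case Nil then show ?case by (simp add: consistent_def)
next
  case (Cons t ts)
  then have "rr Tp (ttgt t) (c + teff t) ts" "t \<in> Tp" "tsrc t = q" by auto
  with Cons.IH[OF this(1)] show ?case by (auto simp: consistent_Cons)
qed

lemma rr_high:
  assumes bnd: "\<forall>t\<in>Tp. \<bar>teff t\<bar> \<le> 1"
  shows "consistent ts \<Longrightarrow> set ts \<subseteq> Tp \<Longrightarrow> (ts \<noteq> [] \<longrightarrow> tsrc (hd ts) = q) \<Longrightarrow> int (length ts) < c \<Longrightarrow> rr Tp q c ts"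
proof (induction ts arbitrary: q c)
  case Nil
  then show ?case by simp
next
  case (Cons t ts)
  have "\<bar>teff t\<bar> \<le> 1" using bnd Cons.prems by auto
  then have "int (length ts) < c + teff t" using Cons.prems(4) by auto
  moreover have "rr Tp (ttgt t) (c + teff t) ts"
    using Cons.IH[of "ttgt t" "c + teff t"] Cons.prems calculation by (auto simp: consistent_Cons)
  then show ?case using Cons.prems by auto
qed

lemma rr_steps: "rr Tp q c ts \<Longrightarrow> \<exists>st. map fst st = ts \<and> okp Tp Tz (q, nat c) st \<and>
   endc (q, nat c) st = (endq q ts, nat (c + eff ts)) \<and> zc st = 0"
proof (induction ts arbitrary: q c)
  case Nil
  then show ?case by (intro exI[of _ "[]"]) (simp add: zc_def)
next
  case (Cons t ts)
  then have h: "t \<in> Tp" "tsrc t = q" "c > 0" "rr Tp (ttgt t) (c + teff t) ts" by auto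
  have pos: "c + teff t > 0" using rr_pos[OF h(4)] .
  obtain st where st: "map fst st = ts" "okp Tp Tz (ttgt t, nat (c + teff t)) st"
    "endc (ttgt t, nat (c + teff t)) st = (endq (ttgt t) ts, nat (c + teff t + eff ts))" "zc st = 0"
    using Cons.IH[OF h(4)] by blast
  show ?case
    apply (rule exI[of _ "(t, (ttgt t, nat (c + teff t))) # st"])
    using st h pos by (auto simp: fires_def zc_def add.assoc)
qed

lemma path_rr: "okp Tp Tz c st \<Longrightarrow> snd c > 0 \<Longrightarrow> \<forall>s\<in>set st. snd (snd s) > 0 \<Longrightarrow>
   rr Tp (fst c) (int (snd c)) (map fst st) \<and> endq (fst c) (map fst st) = fst (endc c st)
   \<and> int (snd c) + eff (map fst st) = int (snd (endc c st))"
proof (induction st arbitrary: c)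
  case Nil
  then show ?case by simp
next
  case (Cons s st)
  then have f: "fires Tp Tz (fst s) c (snd s)" "okp Tp Tz (snd s) st" by auto
  have pos: "snd (snd s) > 0" using Cons.prems by auto
  have IH: "rr Tp (fst (snd s)) (int (snd (snd s))) (map fst st) \<and> endq (fst (snd s)) (map fst st) = fst (endc (snd s) st)
   \<and> int (snd (snd s)) + eff (map fst st) = int (snd (endc (snd s) st))"
    using Cons.IH[OF f(2) pos] Cons.prems by auto
  from f(1) Cons.prems(2) have "fst c = tsrc (fst s)" "fst s \<in> Tp" "fst (snd s) = ttgt (fst s)"
    "int (snd (snd s)) = int (snd c) + teff (fst s)"
    by (auto simp: fires_def)
  then show ?case using IH Cons.prems(2) by (auto simp: add.assoc)
qed

lemma eff_rep: "eff (concat (replicate m s)) = int m * eff s"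
  by (induction m) (auto simp: algebra_simps)
lemma endq_rep: "endq q s = q \<Longrightarrow> endq q (concat (replicate m s)) = q"
  by (induction m) (auto simp: endq_append)

lemma rr_pump:
  assumes bnd: "\<forall>t\<in>Tp. \<bar>teff t\<bar> \<le> 1" and s: "consistent s" "set s \<subseteq> Tp" "s \<noteq> []" "tsrc (hd s) = q" "endq q s = q"
  shows "int (length s) < c \<Longrightarrow> int (length s) < c + int m * eff s \<Longrightarrow> rr Tp q c (concat (replicate m s))"
proof (induction m arbitrary: c)
  case 0
  then show ?case by simp
next
  case (Suc m)
  have r1: "rr Tp q c s" using rr_high[OF bnd] s Suc.prems by auto
  have a: "int (length s) < c + eff s"
  proof (cases "eff s \<ge> 0")
    case True then show ?thesis using Suc.prems by auto
  next
    case False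
    then have "int m * eff s \<le> 0" by (simp add: mult_nonneg_nonpos)
    then show ?thesis using Suc.prems by (auto simp: algebra_simps)
  qed
  have b: "int (length s) < c + eff s + int m * eff s" using Suc.prems by (auto simp: algebra_simps)
  have "rr Tp q (c + eff s) (concat (replicate m s))" using Suc.IH[OF a b] .
  then show ?case using r1 s by (simp add: rr_append)
qed

lemma bez:
  fixes A B d :: int assumes "A > 0" "B > 0" "gcd A B dvd d"
  shows "\<exists>l k :: nat. d + int l * A = int k * B"
proof -
  obtain u v where uv: "u * A + v * B = gcd A B" using bezout_int by blast
  obtain e where e: "d = gcd A B * e" using assms(3) by (auto simp: dvd_def)
  define l0 where "l0 = - e * u"
  define k0 where "k0 = e * v"
  have 0: "d + l0 * A = k0 * B" unfolding l0_def k0_def e uv[symmetric] by (simp add: algebra_simps)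
  define t where "t = \<bar>l0\<bar> + \<bar>k0\<bar>"
  have l: "l0 + t * B \<ge> 0" unfolding t_def using assms(2)
    by (smt (verit) mult_le_cancel_left1 zero_le_mult_iff)
  have k: "k0 + t * A \<ge> 0" unfolding t_def using assms(1)
    by (smt (verit) mult_le_cancel_left1 zero_le_mult_iff)
  have "d + (l0 + t * B) * A = (k0 + t * A) * B" using 0 by (simp add: algebra_simps)
  then show ?thesis using l k
    by (intro exI[of _ "nat (l0 + t * B)"] exI[of _ "nat (k0 + t * A)"]) simp
qed

lemma shortcut_zero:
  assumes ok: "okp Tp Tz \<alpha> (L1 @ M @ L2)" and r: "rr Tp p (int U) \<pi>" and e1: "endc \<alpha> L1 = (p, U)"
    and e2: "endq p \<pi> = fst (endc \<alpha> (L1 @ M))" and e3: "int U + eff \<pi> = int (snd (endc \<alpha> (L1 @ M)))"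
    and z: "zc M > 0"
  shows "\<exists>\<rho>'. is_path Tp Tz \<rho>' \<and> psrc \<rho>' = \<alpha> \<and> ptgt \<rho>' = endc \<alpha> (L1 @ M @ L2) \<and> zeros \<rho>' < zeros (\<alpha>, L1 @ M @ L2)"
proof -
  obtain st where st: "map fst st = \<pi>" "okp Tp Tz (p, nat (int U)) st"
    "endc (p, nat (int U)) st = (endq p \<pi>, nat (int U + eff \<pi>))" "zc st = 0"
    using rr_steps[OF r, of Tz] by blast
  have E: "endc (p, U) st = endc \<alpha> (L1 @ M)" using st(3) e2 e3 by (simp add: prod_eq_iff)
  have ok1: "okp Tp Tz \<alpha> L1" "okp Tp Tz (endc \<alpha> (L1 @ M)) L2" using ok by (auto simp: okp_append endc_append)
  have "okp Tp Tz \<alpha> (L1 @ st @ L2)" using ok1 st(2) e1 E by (simp add: okp_append endc_append)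
  moreover have "endc \<alpha> (L1 @ st @ L2) = endc \<alpha> (L1 @ M @ L2)" using e1 E by (simp add: endc_append)
  moreover have "zeros (\<alpha>, L1 @ st @ L2) < zeros (\<alpha>, L1 @ M @ L2)" using st(4) z by (simp add: zeros_eq)
  ultimately show ?thesis
    by (intro exI[of _ "(\<alpha>, L1 @ st @ L2)"]) (simp add: is_path_okp psrc_def ptgt_eq)
qed




lemma cyc_facts: "is_cycle Tp \<sigma> \<Longrightarrow> consistent \<sigma> \<and> set \<sigma> \<subseteq> Tp \<and> \<sigma> \<noteq> [] \<and> endq (base \<sigma>) \<sigma> = base \<sigma> \<and> tsrc (hd \<sigma>) = base \<sigma>"
  by (auto simp: is_cycle_def base_def endq_last)

lemma simple_len: "simple_cycle Tp \<sigma> \<Longrightarrow> contained \<sigma> X \<Longrightarrow> finite X \<Longrightarrow> length \<sigma> \<le> card X"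
  unfolding simple_cycle_def contained_def
  by (metis card_mono distinct_card length_map)

lemma SCC_sub: "X \<in> SCCs Q Tp \<Longrightarrow> X \<subseteq> Q" by (auto simp: SCCs_def)

lemma SCC_disj: assumes "X \<in> SCCs Q Tp" "Y \<in> SCCs Q Tp" "z \<in> X" "z \<in> Y" shows "X = Y"
proof -
  obtain q1 where q1: "X = {p \<in> Q. (q1, p) \<in> (gedge Tp)\<^sup>* \<and> (p, q1) \<in> (gedge Tp)\<^sup>*}" using assms(1) by (auto simp: SCCs_def)
  obtain q2 where q2: "Y = {p \<in> Q. (q2, p) \<in> (gedge Tp)\<^sup>* \<and> (p, q2) \<in> (gedge Tp)\<^sup>*}" using assms(2) by (auto simp: SCCs_def)
  have "(q1, z) \<in> (gedge Tp)\<^sup>*" "(z, q1) \<in> (gedge Tp)\<^sup>*" "(q2, z) \<in> (gedge Tp)\<^sup>*" "(z, q2) \<in> (gedge Tp)\<^sup>*"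
    using assms(3,4) q1 q2 by auto
  then have "(q1, q2) \<in> (gedge Tp)\<^sup>*" "(q2, q1) \<in> (gedge Tp)\<^sup>*" by (meson rtrancl_trans)+
  then show ?thesis unfolding q1 q2 by (auto intro: rtrancl_trans)
qed

lemma mid_pos:
  assumes "\<forall>m. Suc m < length (X @ M @ Y) \<longrightarrow> snd (snd ((X @ M @ Y) ! m)) > 0"
    and "M \<noteq> [] \<Longrightarrow> Y = [] \<Longrightarrow> snd (snd (last M)) > 0"
  shows "\<forall>s\<in>set M. snd (snd s) > 0"
proof
  fix s assume "s \<in> set M"
  then obtain k where k: "k < length M" "s = M ! k" by (auto simp: in_set_conv_nth)
  show "snd (snd s) > 0"
  proof (cases "Suc (length X + k) < length (X @ M @ Y)")
    case True
    then have "snd (snd ((X @ M @ Y) ! (length X + k))) > 0" using assms(1) by blast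
    then show ?thesis using k by (simp add: nth_append)
  next
    case False
    have "length (X @ M @ Y) = length X + length M + length Y" by simp
    then have "length Y = 0" "k = length M - 1" using k False by linarith+
    then have "Y = []" "k = length M - 1" by auto
    moreover have "M \<noteq> []" using k by auto
    ultimately show ?thesis using assms(2) k by (auto simp: last_conv_nth)
  qed
qed

lemma pconfs_Suc: "m < length xs \<Longrightarrow> pconfs (c, xs) ! Suc m = snd (xs ! m)"
  by (simp add: pconfs_def)

lemma endc_last: "xs \<noteq> [] \<Longrightarrow> endc c xs = snd (last xs)"
  by (simp add: endc_def last_map)

locale L7 =
  fixes Q :: "'q set" and Tp Tz :: "'q trans set"
    and sp sm :: "'q set \<Rightarrow> 'q trans list"
    and \<alpha> \<beta> :: "'q conf" and rs :: "'q path list"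
    and L N :: "nat set"
    and S T :: "nat \<Rightarrow> 'q set"
    and pre up cap down suf :: "nat \<Rightarrow> 'q path"
    and a b :: "nat \<Rightarrow> nat"
  assumes ocs: "ocs Q Tp Tz"
    and sig: "sigma_ok Q Tp sp sm"
    and a0: "snd \<alpha> = 0" and b0: "snd \<beta> = 0"
    and arcs: "\<forall>i < length rs. is_arc Tp Tz (rs ! i)"
    and chain: "\<forall>i. Suc i < length rs \<longrightarrow> ptgt (rs ! i) = psrc (rs ! Suc i)"
    and ends: "if rs = [] then \<alpha> = \<beta> else psrc (hd rs) = \<alpha> \<and> ptgt (last rs) = \<beta>"
    and minimal: "\<forall>\<rho>'. is_path Tp Tz \<rho>' \<and> psrc \<rho>' = \<alpha> \<and> ptgt \<rho>' = \<beta> \<longrightarrow>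
                    zeros (\<alpha>, concat (map snd rs)) \<le> zeros \<rho>'"
    and part: "L \<inter> N = {}" "L \<union> N = {..<length rs}"
    and normal: "\<forall>i \<in> N. good_decomp Q Tp Tz sp sm (S i) (T i) (rs ! i)
                    (pre i) (up i) (cap i) (down i) (suf i) (a i) (b i)"
begin

lemma finQ: "finite Q" using ocs by (simp add: ocs_def)
lemma bnd: "\<forall>t\<in>Tp. \<bar>teff t\<bar> \<le> 1" using ocs by (auto simp: ocs_def teff_def)
lemma TpQ: "t \<in> Tp \<Longrightarrow> tsrc t \<in> Q \<and> ttgt t \<in> Q" using ocs by (auto simp: ocs_def tsrc_def ttgt_def)
lemma Nsub: "N \<subseteq> {..<length rs}" using part by auto
lemma finN: "finite N" using Nsub finite_subset by blast

lemma gd: "i \<in> N \<Longrightarrow> good_decomp Q Tp Tz sp sm (S i) (T i) (rs ! i) (pre i) (up i) (cap i) (down i) (suf i) (a i) (b i)"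
  using normal by blast

lemma nd: "i \<in> N \<Longrightarrow> normal_decomp Q Tp Tz sp sm (S i) (T i) (rs ! i) (pre i) (up i) (cap i) (down i) (suf i) (a i) (b i)"
  using gd by (simp add: good_decomp_def)

lemma sigp: "i \<in> N \<Longrightarrow> simple_cycle Tp (sp (S i)) \<and> contained (sp (S i)) (S i) \<and> eff (sp (S i)) > 0"
  using nd[of i] sig by (auto simp: normal_decomp_def sigma_ok_def)
lemma sigm: "i \<in> N \<Longrightarrow> simple_cycle Tp (sm (T i)) \<and> contained (sm (T i)) (T i) \<and> eff (sm (T i)) < 0"
  using nd[of i] sig by (auto simp: normal_decomp_def sigma_ok_def)
lemma SinSCC: "i \<in> N \<Longrightarrow> S i \<in> SCCs Q Tp \<and> T i \<in> SCCs Q Tp"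
  using nd[of i] by (auto simp: normal_decomp_def)

lemma lenp: "i \<in> N \<Longrightarrow> length (sp (S i)) \<le> card (S i) \<and> card (S i) \<le> card Q"
  using sigp[of i] SinSCC[of i] SCC_sub[of "S i" Q Tp] finQ
  by (meson card_mono finite_subset simple_len)
lemma lenm: "i \<in> N \<Longrightarrow> length (sm (T i)) \<le> card (T i) \<and> card (T i) \<le> card Q"
  using sigm[of i] SinSCC[of i] SCC_sub[of "T i" Q Tp] finQ
  by (meson card_mono finite_subset simple_len)

lemma highs: "i \<in> N \<Longrightarrow> snd (psrc (cap i)) > card Q \<and> snd (psrc (down i)) > card Q"
  using gd[of i] nd[of i] by (auto simp: good_decomp_def normal_decomp_def)

lemma bases: "i \<in> N \<Longrightarrow> fst (psrc (cap i)) = base (sp (S i)) \<and> fst (psrc (down i)) = base (sm (T i))"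
  using nd[of i] by (auto simp: normal_decomp_def)

lemma stepsi: "i \<in> N \<Longrightarrow> rs ! i = (psrc (pre i), snd (pre i) @ snd (up i) @ snd (cap i) @ snd (down i) @ snd (suf i))"
  using nd[of i] by (auto simp: normal_decomp_def)

lemma endc_cap: "i \<in> N \<Longrightarrow> endc (psrc (pre i)) (snd (pre i) @ snd (up i)) = psrc (cap i)
   \<and> endc (psrc (cap i)) (snd (cap i)) = psrc (down i)"
  using nd[of i] by (auto simp: normal_decomp_def endc_append ptgt_eq[symmetric])

lemma arc_i: "i \<in> N \<Longrightarrow> is_arc Tp Tz (rs ! i)"
  using arcs Nsub by auto

lemma cap_pos: assumes "i \<in> N" shows "\<forall>s\<in>set (snd (cap i)). snd (snd s) > 0"
proof -
  let ?X = "snd (pre i) @ snd (up i)" and ?M = "snd (cap i)" and ?Y = "snd (down i) @ snd (suf i)"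
  have arc: "is_arc Tp Tz (psrc (pre i), ?X @ ?M @ ?Y)" using arc_i[OF assms] stepsi[OF assms] by simp
  have 1: "\<forall>m. Suc m < length (?X @ ?M @ ?Y) \<longrightarrow> snd (snd ((?X @ ?M @ ?Y) ! m)) > 0"
  proof (intro allI impI)
    fix m assume "Suc m < length (?X @ ?M @ ?Y)"
    then have "snd (pconfs (psrc (pre i), ?X @ ?M @ ?Y) ! Suc m) > 0"
      using arc unfolding is_arc_def plen_def by auto
    then show "snd (snd ((?X @ ?M @ ?Y) ! m)) > 0"
      using \<open>Suc m < _\<close> pconfs_Suc[of m "?X @ ?M @ ?Y" "psrc (pre i)"] by simp
  qed
  have 2: "snd (snd (last ?M)) > 0" if "?M \<noteq> []"
    using endc_cap[OF assms] highs[OF assms] endc_last[OF that, of "psrc (cap i)"] by simp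
  show ?thesis using mid_pos[OF 1 2] by blast
qed

lemma cap_rr: assumes "i \<in> N"
  shows "rr Tp (fst (psrc (cap i))) (int (snd (psrc (cap i)))) (proj (cap i))
    \<and> endq (fst (psrc (cap i))) (proj (cap i)) = fst (psrc (down i))
    \<and> int (snd (psrc (cap i))) + eff (proj (cap i)) = int (snd (psrc (down i)))"
proof -
  have "is_path Tp Tz (cap i)" using nd[OF assms] by (simp add: normal_decomp_def)
  then have ok: "okp Tp Tz (psrc (cap i)) (snd (cap i))"
    by (metis is_path_okp prod.collapse psrc_def)
  have p: "snd (psrc (cap i)) > 0" using highs[OF assms] by auto
  show ?thesis using path_rr[OF ok p cap_pos[OF assms]] endc_cap[OF assms] by (simp add: proj_def)
qed

lemma zc_tail: assumes "i \<in> N" shows "zc (snd (cap i) @ snd (down i) @ snd (suf i)) > 0"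
proof -
  let ?R = "snd (cap i) @ snd (down i) @ snd (suf i)"
  have "snd (ptgt (rs ! i)) = 0" using arc_i[OF assms] by (simp add: is_arc_def)
  moreover have "ptgt (rs ! i) = endc (psrc (cap i)) ?R"
    using stepsi[OF assms] endc_cap[OF assms] by (simp add: ptgt_eq psrc_def endc_append)
  ultimately have z: "snd (endc (psrc (cap i)) ?R) = 0" by simp
  have "?R \<noteq> []" using z highs[OF assms] by (metis endc_Nil gr_implies_not0)
  have "last ?R \<in> set ?R" using \<open>?R \<noteq> []\<close> by (rule last_in_set)
  moreover have "snd (snd (last ?R)) = 0" using z endc_last[OF \<open>?R \<noteq> []\<close>, of "psrc (cap i)"] by simp
  ultimately show ?thesis unfolding zc_def by (metis (mono_tags, lifting) filter_empty_conv length_greater_0_conv)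
qed

end



context L7
begin

lemma E1: "k < length rs \<Longrightarrow> endc \<alpha> (concat (map snd (take k rs))) = psrc (rs ! k)"
proof (induction k)
  case 0
  then have "rs \<noteq> []" by auto
  then show ?case using ends by (simp add: hd_conv_nth)
next
  case (Suc k)
  then have "endc \<alpha> (concat (map snd (take k rs))) = psrc (rs ! k)" by simp
  then have "endc \<alpha> (concat (map snd (take (Suc k) rs))) = ptgt (rs ! k)"
    using Suc.prems by (simp add: take_Suc_conv_app_nth endc_append ptgt_eq)
  then show ?case using chain Suc.prems by simp
qed

lemma okp_arc: "k < length rs \<Longrightarrow> okp Tp Tz (psrc (rs ! k)) (snd (rs ! k))"
  using arcs by (metis is_arc_def is_path_okp prod.collapse psrc_def)

lemma E2: "k \<le> length rs \<Longrightarrow> okp Tp Tz \<alpha> (concat (map snd (take k rs)))"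
proof (induction k)
  case 0
  then show ?case by simp
next
  case (Suc k)
  then show ?case using E1[of k] okp_arc[of k]
    by (simp add: take_Suc_conv_app_nth okp_append)
qed

lemma okW: "okp Tp Tz \<alpha> (concat (map snd rs))"
  using E2[of "length rs"] by simp

lemma Ebeta: assumes "rs \<noteq> []" shows "endc \<alpha> (concat (map snd rs)) = \<beta>"
proof -
  let ?k = "length rs - 1"
  have k: "?k < length rs" using assms by simp
  have e: "butlast rs @ [last rs] = rs" using assms by (rule append_butlast_last_id)
  have "concat (map snd rs) = concat (map snd (butlast rs)) @ snd (last rs)"
    by (subst (1) e[symmetric]) simp
  moreover have "butlast rs = take ?k rs" by (simp add: butlast_conv_take)
  moreover have "rs ! ?k = last rs" using assms by (simp add: last_conv_nth)
  ultimately have "endc \<alpha> (concat (map snd rs)) = ptgt (last rs)" using E1[OF k] by (simp add: endc_append ptgt_eq)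
  then show ?thesis using ends assms by simp
qed

lemma take_split: assumes "i < j" "j < length rs"
  shows "take j rs = take i rs @ [rs ! i] @ take (j - Suc i) (drop (Suc i) rs)"
proof -
  have "take j rs = take (Suc i + (j - Suc i)) rs" using assms by simp
  also have "\<dots> = take (Suc i) rs @ take (j - Suc i) (drop (Suc i) rs)" by (rule take_add)
  finally show ?thesis using assms by (simp add: take_Suc_conv_app_nth)
qed

lemma W_split: assumes "j < length rs"
  shows "concat (map snd rs) = concat (map snd (take j rs)) @ snd (rs ! j) @ concat (map snd (drop (Suc j) rs))"
proof -
  have e: "take j rs @ rs ! j # drop (Suc j) rs = rs" using assms by (metis id_take_nth_drop)
  show ?thesis by (subst (1) e[symmetric]) simp
qed

lemma no_short:
  assumes i: "i \<in> N" and j: "j \<in> N" and ij: "i < j"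
    and x: "x \<le> length (proj (cap i))" and y: "y \<le> length (proj (cap j))"
    and q: "endq (fst (psrc (cap i))) (take x (proj (cap i))) = endq (fst (psrc (cap j))) (take y (proj (cap j)))"
    and g: "gcd (eff (sp (S i))) (- eff (sm (T j))) dvd
       (int (snd (psrc (cap i))) + eff (take x (proj (cap i))) - (int (snd (psrc (cap j))) + eff (take y (proj (cap j)))))"
  shows False
proof -
  define Pi where "Pi = proj (cap i)"
  define Pj where "Pj = proj (cap j)"
  define pi where "pi = fst (psrc (cap i))"
  define pj where "pj = fst (psrc (cap j))"
  define Ui where "Ui = int (snd (psrc (cap i)))"
  define Uj where "Uj = int (snd (psrc (cap j)))"
  define rj where "rj = fst (psrc (down j))"
  define Dj where "Dj = int (snd (psrc (down j)))"
  define sg where "sg = sp (S i)"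
  define sn where "sn = sm (T j)"
  define A where "A = eff sg"
  define B where "B = - eff sn"
  define qq where "qq = endq pi (take x Pi)"
  have ri: "rr Tp pi Ui Pi" using cap_rr[OF i] unfolding pi_def Ui_def Pi_def by blast
  have rjj: "rr Tp pj Uj Pj" "endq pj Pj = rj" "Uj + eff Pj = Dj"
    using cap_rr[OF j] unfolding pj_def Uj_def Pj_def rj_def Dj_def by blast+
  have A0: "A > 0" using sigp[OF i] unfolding A_def sg_def by simp
  have B0: "B > 0" using sigm[OF j] unfolding B_def sn_def by simp
  have g': "gcd A B dvd (Ui + eff (take x Pi) - (Uj + eff (take y Pj)))"
    using g by (simp add: A_def B_def sg_def sn_def Ui_def Uj_def Pi_def Pj_def)
  obtain l k :: nat where lk: "(Ui + eff (take x Pi) - (Uj + eff (take y Pj))) + int l * A = int k * B"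
    using bez[OF A0 B0 g'] by blast
  have cg: "consistent sg" "set sg \<subseteq> Tp" "sg \<noteq> []" "endq pi sg = pi" "tsrc (hd sg) = pi"
    using cyc_facts[of Tp sg] sigp[OF i] bases[OF i] unfolding sg_def pi_def simple_cycle_def by auto
  have cn: "consistent sn" "set sn \<subseteq> Tp" "sn \<noteq> []" "endq rj sn = rj" "tsrc (hd sn) = rj"
    using cyc_facts[of Tp sn] sigm[OF j] bases[OF j] unfolding sn_def rj_def simple_cycle_def by auto
  have lg: "int (length sg) < Ui" using lenp[OF i] highs[OF i] unfolding sg_def Ui_def by linarith
  have ln: "int (length sn) < Dj" using lenm[OF j] highs[OF j] unfolding sn_def Dj_def by linarith
  have r1: "rr Tp pi Ui (concat (replicate l sg))"
  proof (rule rr_pump[OF bnd cg(1,2,3,5,4) lg])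
    have "0 \<le> int l * A" using A0 by simp
    then show "int (length sg) < Ui + int l * eff sg" using lg unfolding A_def by linarith
  qed
  have r2: "rr Tp pi (Ui + int l * A) (take x Pi)"
  proof -
    have "rr Tp pi Ui (take x Pi)" using rr_append[of Tp pi Ui "take x Pi" "drop x Pi"] ri by simp
    moreover have "Ui \<le> Ui + int l * A" using A0 by simp
    ultimately show ?thesis by (rule rr_mono)
  qed
  have kB: "0 \<le> int k * B" using B0 by simp
  have r3: "rr Tp qq (Ui + int l * A + eff (take x Pi)) (drop y Pj)"
  proof -
    have h: "rr Tp (endq pj (take y Pj)) (Uj + eff (take y Pj)) (drop y Pj)"
      using rr_append[of Tp pj Uj "take y Pj" "drop y Pj"] rjj(1) by simp
    have "endq pj (take y Pj) = qq" using q unfolding qq_def pi_def pj_def Pi_def Pj_def by simp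
    moreover have "Uj + eff (take y Pj) \<le> Ui + int l * A + eff (take x Pi)" using lk kB by linarith
    ultimately show ?thesis using h rr_mono by metis
  qed
  have e3: "endq qq (drop y Pj) = rj"
    using rjj(2) q endq_append[of pj "take y Pj" "drop y Pj"] unfolding qq_def pi_def pj_def Pi_def Pj_def by simp
  have c3: "Ui + int l * A + eff (take x Pi) + eff (drop y Pj) = Dj + int k * B"
  proof -
    have "eff (take y Pj) + eff (drop y Pj) = eff Pj" by (metis append_take_drop_id eff_append)
    then show ?thesis using lk rjj(3) by linarith
  qed
  have r4: "rr Tp rj (Dj + int k * B) (concat (replicate k sn))"
  proof (rule rr_pump[OF bnd cn(1,2,3,5,4)])
    have "0 \<le> int k * B" using B0 by simp
    then show "int (length sn) < Dj + int k * B" using ln by linarith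
    show "int (length sn) < Dj + int k * B + int k * eff sn" using ln unfolding B_def by simp
  qed
  define \<pi> where "\<pi> = concat (replicate l sg) @ take x Pi @ drop y Pj @ concat (replicate k sn)"
  have effr: "eff (concat (replicate l sg)) = int l * A" "eff (concat (replicate k sn)) = - (int k * B)"
    unfolding A_def B_def by (simp_all add: eff_rep)
  have rp: "rr Tp pi Ui \<pi>"
    unfolding \<pi>_def using r1 r2 r3 r4 c3 effr cg(4) e3 qq_def
    by (simp add: rr_append endq_rep endq_append add.assoc)
  have ep: "endq pi \<pi> = rj"
    unfolding \<pi>_def using cg(4) cn(4) e3 qq_def by (simp add: endq_rep endq_append)
  have cp: "Ui + eff \<pi> = Dj"
    unfolding \<pi>_def using c3 effr by simp
  have jl: "j < length rs" and il: "i < length rs" using Nsub i j by auto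
  define X where "X = concat (map snd (take i rs))"
  define Y where "Y = concat (map snd (take (j - Suc i) (drop (Suc i) rs)))"
  define Z where "Z = concat (map snd (drop (Suc j) rs))"
  define L1 where "L1 = X @ snd (pre i) @ snd (up i)"
  define M where "M = snd (cap i) @ snd (down i) @ snd (suf i) @ Y @ snd (pre j) @ snd (up j) @ snd (cap j)"
  define L2 where "L2 = snd (down j) @ snd (suf j) @ Z"
  have tj: "concat (map snd (take j rs)) = X @ snd (rs ! i) @ Y"
    unfolding X_def Y_def using take_split[OF ij jl] by simp
  have LM: "L1 @ M = concat (map snd (take j rs)) @ snd (pre j) @ snd (up j) @ snd (cap j)"
    unfolding tj L1_def M_def using stepsi[OF i] by simp
  have W: "concat (map snd rs) = L1 @ M @ L2"
  proof -
    have "L1 @ M @ L2 = (L1 @ M) @ L2" by simp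
    also have "\<dots> = concat (map snd (take j rs)) @ snd (rs ! j) @ Z"
      unfolding LM L2_def using stepsi[OF j] by simp
    finally show ?thesis using W_split[OF jl] unfolding Z_def by simp
  qed
  have eL1: "endc \<alpha> L1 = (pi, snd (psrc (cap i)))"
  proof -
    have "endc \<alpha> X = psrc (pre i)" unfolding X_def using E1[OF il] stepsi[OF i] by (metis fst_conv psrc_def)
    then show ?thesis unfolding L1_def using endc_cap[OF i] by (simp add: endc_append pi_def)
  qed
  have eLM: "endc \<alpha> (L1 @ M) = psrc (down j)"
  proof -
    have "endc \<alpha> (concat (map snd (take j rs))) = psrc (pre j)" using E1[OF jl] stepsi[OF j] by (metis fst_conv psrc_def)
    then show ?thesis unfolding LM using endc_cap[OF j] by (simp add: endc_append)
  qed
  have zM: "zc M > 0" unfolding M_def using zc_tail[OF i] by auto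
  have ok: "okp Tp Tz \<alpha> (L1 @ M @ L2)" using okW W by simp
  have ex: "\<exists>\<rho>'. is_path Tp Tz \<rho>' \<and> psrc \<rho>' = \<alpha> \<and> ptgt \<rho>' = endc \<alpha> (L1 @ M @ L2)
      \<and> zeros \<rho>' < zeros (\<alpha>, L1 @ M @ L2)"
    by (rule shortcut_zero[OF ok _ eL1 _ _ zM]) (use rp ep cp eLM in \<open>simp_all add: Ui_def rj_def Dj_def\<close>)
  then obtain \<rho>' where \<rho>': "is_path Tp Tz \<rho>'" "psrc \<rho>' = \<alpha>" "ptgt \<rho>' = endc \<alpha> (L1 @ M @ L2)"
      "zeros \<rho>' < zeros (\<alpha>, L1 @ M @ L2)" by blast
  have "rs \<noteq> []" using jl by auto
  then have "ptgt \<rho>' = \<beta>" using \<rho>'(3) Ebeta W by simp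
  then have "zeros (\<alpha>, concat (map snd rs)) \<le> zeros \<rho>'" using minimal \<rho>'(1,2) by blast
  then show False using \<rho>'(4) W by simp
qed

end



lemma eff_le_len: "\<forall>t\<in>Tp. \<bar>teff t\<bar> \<le> 1 \<Longrightarrow> set ts \<subseteq> Tp \<Longrightarrow> \<bar>eff ts\<bar> \<le> int (length ts)"
proof (induction ts)
  case Nil then show ?case by simp
next
  case (Cons t ts)
  then have "\<bar>teff t\<bar> \<le> 1" "\<bar>eff ts\<bar> \<le> int (length ts)" by auto
  then show ?case using abs_triangle_ineq[of "teff t" "eff ts"] by simp
qed

context L7
begin

lemma no_cyc_cap:
  assumes i: "i \<in> N" and xy: "x < y" "y \<le> length (proj (cap i))"
    and q: "endq (fst (psrc (cap i))) (take x (proj (cap i))) = endq (fst (psrc (cap i))) (take y (proj (cap i)))"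
    and g: "gcd (eff (sp (S i))) (- eff (sm (T i))) dvd (eff (take y (proj (cap i))) - eff (take x (proj (cap i))))"
  shows False
proof -
  define P where "P = proj (cap i)"
  define p where "p = fst (psrc (cap i))"
  define U where "U = int (snd (psrc (cap i)))"
  define c where "c = take (y - x) (drop x P)"
  have ty: "take y P = take x P @ c" unfolding c_def using take_add[of x "y - x" P] xy by simp
  have PP: "P = take x P @ c @ drop y P" using ty by (metis append.assoc append_take_drop_id)
  have r: "rr Tp p U P" using cap_rr[OF i] unfolding p_def U_def P_def by blast
  have "rr Tp p U (take x P @ c @ drop y P)" using r PP by simp
  then have "rr Tp (endq p (take x P)) (U + eff (take x P)) (c @ drop y P)" by (rule rr_append[THEN iffD1, THEN conjunct2])
  then have rc: "rr Tp (endq p (take x P)) (U + eff (take x P)) c" by (rule rr_append[THEN iffD1, THEN conjunct1])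
  have cne: "c \<noteq> []" unfolding c_def using xy by (simp add: P_def)
  have "ttgt (last c) = endq (endq p (take x P)) c" using endq_last[OF cne] by simp
  also have "\<dots> = endq p (take y P)" using ty by (simp add: endq_append)
  also have "\<dots> = endq p (take x P)" using q unfolding p_def P_def by simp
  finally have cl: "ttgt (last c) = endq p (take x P)" .
  have cyc: "is_cycle Tp c" using rr_props[OF rc] cne cl unfolding is_cycle_def by simp
  have ec: "eff c = eff (take y P) - eff (take x P)" using ty by simp
  have v: "\<not> (\<exists>xs c ys. proj (cap i) = xs @ c @ ys \<and> is_cycle Tp c \<and> gcd (eff (sp (S i))) (- eff (sm (T i))) dvd eff c)"
    using gd[OF i] unfolding good_decomp_def Let_def by blast
  have "\<exists>xs c ys. proj (cap i) = xs @ c @ ys \<and> is_cycle Tp c \<and> gcd (eff (sp (S i))) (- eff (sm (T i))) dvd eff c"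
    apply (rule exI[of _ "take x P"], rule exI[of _ c], rule exI[of _ "drop y P"])
    using PP cyc ec g unfolding P_def by simp
  then show False using v by blast
qed

lemma base_Q: assumes i: "i \<in> N" shows "fst (psrc (cap i)) \<in> Q"
proof -
  have "is_cycle Tp (sp (S i))" using sigp[OF i] by (simp add: simple_cycle_def)
  then have h: "hd (sp (S i)) \<in> Tp" unfolding is_cycle_def by (meson hd_in_set subsetD)
  have "fst (psrc (cap i)) = tsrc (hd (sp (S i)))" using bases[OF i] by (simp add: base_def)
  then show ?thesis using TpQ[OF h] by simp
qed

lemma st_Q: assumes i: "i \<in> N" shows "endq (fst (psrc (cap i))) (take x (proj (cap i))) \<in> Q"
proof -
  have "rr Tp (fst (psrc (cap i))) (int (snd (psrc (cap i)))) (proj (cap i))" using cap_rr[OF i] by (rule conjunct1)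
  then have "set (proj (cap i)) \<subseteq> Tp" by (rule rr_props[THEN conjunct2, THEN conjunct1])
  then have s: "set (take x (proj (cap i))) \<subseteq> Tp" by (rule order_trans[OF set_take_subset])
  have "ttgt ` set (take x (proj (cap i))) \<subseteq> Q"
  proof
    fix z assume "z \<in> ttgt ` set (take x (proj (cap i)))"
    then obtain t where "t \<in> set (take x (proj (cap i)))" "z = ttgt t" by blast
    then have "t \<in> Tp" using s by blast
    then show "z \<in> Q" using TpQ \<open>z = ttgt t\<close> by simp
  qed
  then have "insert (fst (psrc (cap i))) (ttgt ` set (take x (proj (cap i)))) \<subseteq> Q" using base_Q[OF i] by simp
  then show ?thesis using endq_in[of "fst (psrc (cap i))" "take x (proj (cap i))"] by (rule subsetD)
qed

definition cn :: "nat \<Rightarrow> nat \<Rightarrow> int" where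
  "cn i x = int (snd (psrc (cap i))) + eff (take x (proj (cap i)))"
definition stt :: "nat \<Rightarrow> nat \<Rightarrow> 'q" where
  "stt i x = endq (fst (psrc (cap i))) (take x (proj (cap i)))"

lemma pigeon_gen:
  fixes I :: "nat set" and m :: int
  assumes I: "I \<subseteq> N" and m: "m > 0"
    and hyp: "\<And>i j d. i \<in> I \<Longrightarrow> j \<in> I \<Longrightarrow> i < j \<Longrightarrow> m dvd d \<Longrightarrow> gcd (eff (sp (S i))) (- eff (sm (T j))) dvd d"
    and hyp2: "\<And>i d. i \<in> I \<Longrightarrow> m dvd d \<Longrightarrow> gcd (eff (sp (S i))) (- eff (sm (T i))) dvd d"
  shows "(\<Sum>i\<in>I. length (proj (cap i))) \<le> card Q * nat m"
proof -
  define PS where "PS = Sigma I (\<lambda>i. {..<length (proj (cap i))})"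
  define f where "f = (\<lambda>(i, x). (stt i x, cn i x mod m))"
  have finI: "finite I" using I finN finite_subset by blast
  have cardPS: "card PS = (\<Sum>i\<in>I. length (proj (cap i)))" unfolding PS_def using finI by simp
  have inj: "inj_on f PS"
  proof (rule inj_onI)
    fix u v assume u: "u \<in> PS" and v: "v \<in> PS" and fe: "f u = f v"
    obtain i x where ix: "u = (i, x)" by force
    obtain j y where jy: "v = (j, y)" by force
    have iI: "i \<in> I" "x < length (proj (cap i))" using u ix PS_def by auto
    have jI: "j \<in> I" "y < length (proj (cap j))" using v jy PS_def by auto
    have st: "stt i x = stt j y" and md: "cn i x mod m = cn j y mod m" using fe ix jy f_def by auto
    have d1: "m dvd (cn i x - cn j y)" using md by (simp add: mod_eq_dvd_iff)
    have d2: "m dvd (cn j y - cn i x)" using d1 by (simp add: dvd_diff_commute)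
    have iN: "i \<in> N" and jN: "j \<in> N" using iI jI I by auto
    have stq: "endq (fst (psrc (cap i))) (take x (proj (cap i))) = endq (fst (psrc (cap j))) (take y (proj (cap j)))"
      using st unfolding stt_def .
    have xl: "x \<le> length (proj (cap i))" and yl: "y \<le> length (proj (cap j))" using iI jI by auto
    show "u = v"
    proof (cases i j rule: linorder_cases)
      case less
      have "gcd (eff (sp (S i))) (- eff (sm (T j))) dvd (cn i x - cn j y)" by (rule hyp[OF iI(1) jI(1) less d1])
      then have False using no_short[OF iN jN less xl yl stq] unfolding cn_def by simp
      then show ?thesis ..
    next
      case greater
      have "gcd (eff (sp (S j))) (- eff (sm (T i))) dvd (cn j y - cn i x)" by (rule hyp[OF jI(1) iI(1) greater d2])
      then have False using no_short[OF jN iN greater yl xl stq[symmetric]] unfolding cn_def by simp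
      then show ?thesis ..
    next
      case equal
      then have stq': "endq (fst (psrc (cap i))) (take x (proj (cap i))) = endq (fst (psrc (cap i))) (take y (proj (cap i)))"
        using stq by simp
      have yl': "y \<le> length (proj (cap i))" using yl equal by simp
      show ?thesis
      proof (cases x y rule: linorder_cases)
        case less
        have "m dvd eff (take y (proj (cap i))) - eff (take x (proj (cap i)))"
          using d2 equal unfolding cn_def by simp
        then have "gcd (eff (sp (S i))) (- eff (sm (T i))) dvd eff (take y (proj (cap i))) - eff (take x (proj (cap i)))"
          by (rule hyp2[OF iI(1)])
        then have False by (rule no_cyc_cap[OF iN less yl' stq'])
        then show ?thesis ..
      next
        case greater
        have "m dvd eff (take x (proj (cap i))) - eff (take y (proj (cap i)))"
          using d1 equal unfolding cn_def by simp
        then have "gcd (eff (sp (S i))) (- eff (sm (T i))) dvd eff (take x (proj (cap i))) - eff (take y (proj (cap i)))"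
          by (rule hyp2[OF iI(1)])
        then have False by (rule no_cyc_cap[OF iN greater xl stq'[symmetric]])
        then show ?thesis ..
      next
        case equal2: equal
        then show ?thesis using ix jy equal by simp
      qed
    qed
  qed
  have sub: "f ` PS \<subseteq> Q \<times> {0..<m}"
  proof
    fix w assume "w \<in> f ` PS"
    then obtain i x where "(i, x) \<in> PS" "w = f (i, x)" by auto
    then show "w \<in> Q \<times> {0..<m}" using st_Q[of i x] I m unfolding PS_def f_def stt_def by auto
  qed
  have "card PS = card (f ` PS)" using inj by (simp add: card_image)
  also have "\<dots> \<le> card (Q \<times> {0..<m})" using sub finQ by (intro card_mono) auto
  also have "\<dots> = card Q * nat m" by (simp add: card_cartesian_product)
  finally show ?thesis using cardPS by simp
qed

end



lemma abstract_bound: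
  fixes I :: "nat set" and G :: "nat \<Rightarrow> 'q set" and A :: int and Bf :: "'q set \<Rightarrow> int"
    and len c :: "nat \<Rightarrow> nat" and n :: nat
  assumes fin: "finite I" and A: "A > 0"
    and per: "\<And>i. i \<in> I \<Longrightarrow> int (c i) * A \<le> 2 * int (len i) + 2 * lcm A (Bf (G i))"
    and lenb: "(\<Sum>i\<in>I. len i) \<le> n * nat A"
    and cnt: "\<And>t. t \<in> G ` I \<Longrightarrow> card {i \<in> I. G i = t} \<le> nat (gcd A (Bf t)) \<and> 0 < Bf t \<and> Bf t \<le> int (card t)"
    and disj: "(\<Sum>t\<in>G ` I. card t) \<le> n"
  shows "(\<Sum>i\<in>I. c i) \<le> 4 * n"
proof -
  have s1: "(\<Sum>i\<in>I. int (c i) * A) \<le> (\<Sum>i\<in>I. 2 * int (len i) + 2 * lcm A (Bf (G i)))"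
    using per by (rule sum_mono)
  have s2: "(\<Sum>i\<in>I. int (len i)) \<le> int n * A"
  proof -
    have "(\<Sum>i\<in>I. int (len i)) = int (\<Sum>i\<in>I. len i)" by simp
    also have "\<dots> \<le> int (n * nat A)" using lenb by linarith
    also have "\<dots> = int n * A" using A by simp
    finally show ?thesis .
  qed
  have s3: "(\<Sum>i\<in>I. lcm A (Bf (G i))) \<le> A * int n"
  proof -
    have "(\<Sum>i\<in>I. lcm A (Bf (G i))) = (\<Sum>t\<in>G ` I. \<Sum>i\<in>{x \<in> I. G x = t}. lcm A (Bf (G i)))"
      using fin by (rule sum.image_gen)
    also have "\<dots> = (\<Sum>t\<in>G ` I. int (card {x \<in> I. G x = t}) * lcm A (Bf t))"
      by (rule sum.cong) auto
    also have "\<dots> \<le> (\<Sum>t\<in>G ` I. A * int (card t))"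
    proof (rule sum_mono)
      fix t assume t: "t \<in> G ` I"
      have c: "card {i \<in> I. G i = t} \<le> nat (gcd A (Bf t))" "0 < Bf t" "Bf t \<le> int (card t)" using cnt[OF t] by auto
      have "int (card {x \<in> I. G x = t}) * lcm A (Bf t) \<le> gcd A (Bf t) * lcm A (Bf t)"
      proof (rule mult_right_mono)
        show "int (card {x \<in> I. G x = t}) \<le> gcd A (Bf t)" using c(1) by (simp add: le_nat_iff)
        show "0 \<le> lcm A (Bf t)" by simp
      qed
      also have "\<dots> = A * Bf t" using prod_gcd_lcm_int[of A "Bf t"] A c(2) by simp
      also have "\<dots> \<le> A * int (card t)" using c(3) A by simp
      finally show "int (card {x \<in> I. G x = t}) * lcm A (Bf t) \<le> A * int (card t)" .
    qed
    also have "\<dots> = A * int (\<Sum>t\<in>G ` I. card t)" by (simp add: sum_distrib_left)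
    also have "\<dots> \<le> A * int n"
    proof (rule mult_left_mono)
      show "int (\<Sum>t\<in>G ` I. card t) \<le> int n" using disj by (simp only: of_nat_le_iff)
      show "0 \<le> A" using A by simp
    qed
    finally show ?thesis .
  qed
  have "A * int (\<Sum>i\<in>I. c i) = (\<Sum>i\<in>I. int (c i) * A)" by (simp add: sum_distrib_left mult.commute)
  also have "\<dots> \<le> 2 * (\<Sum>i\<in>I. int (len i)) + 2 * (\<Sum>i\<in>I. lcm A (Bf (G i)))"
    using s1 by (simp add: sum.distrib sum_distrib_left)
  also have "\<dots> \<le> A * (4 * int n)" using s2 s3 by (simp add: algebra_simps)
  finally have "A * int (\<Sum>i\<in>I. c i) \<le> A * (4 * int n)" .
  then have "int (\<Sum>i\<in>I. c i) \<le> 4 * int n" using A by simp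
  then show ?thesis by linarith
qed

context L7
begin

lemma sum_SCC: assumes "C \<subseteq> SCCs Q Tp" "finite C" shows "(\<Sum>X\<in>C. card X) \<le> card Q"
proof -
  have pw: "pairwise disjnt C"
  proof (rule pairwiseI)
    fix X Y assume X: "X \<in> C" and Y: "Y \<in> C" and ne: "X \<noteq> Y"
    show "disjnt X Y" unfolding disjnt_def
    proof (rule ccontr)
      assume "X \<inter> Y \<noteq> {}"
      then obtain z where "z \<in> X" "z \<in> Y" by auto
      then have "X = Y" using SCC_disj[of X Q Tp Y z] X Y assms(1) by auto
      then show False using ne by simp
    qed
  qed
  have fm: "\<And>X. X \<in> C \<Longrightarrow> finite X"
  proof -
    fix X assume "X \<in> C"
    then have "X \<subseteq> Q" using assms(1) SCC_sub[of X Q Tp] by auto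
    then show "finite X" using finQ finite_subset by auto
  qed
  have "card (\<Union>C) = (\<Sum>X\<in>C. card X)" by (rule card_Union_disjoint[OF pw fm])
  moreover have "\<Union>C \<subseteq> Q"
  proof
    fix x assume "x \<in> \<Union>C"
    then obtain X where X: "X \<in> C" "x \<in> X" by auto
    then have "X \<in> SCCs Q Tp" using assms(1) by auto
    then have "X \<subseteq> Q" by (rule SCC_sub)
    then show "x \<in> Q" using X by auto
  qed
  then have "card (\<Union>C) \<le> card Q" using finQ by (rule card_mono[rotated])
  ultimately show ?thesis by simp
qed

lemma per_up: "i \<in> N \<Longrightarrow> int (a i) * eff (sp (S i)) \<le> 2 * int (length (proj (cap i))) + 2 * lcm (eff (sp (S i))) (- eff (sm (T i)))"
  using gd[of i] unfolding good_decomp_def Let_def by (simp add: plen_def proj_def)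
lemma per_down: "i \<in> N \<Longrightarrow> int (b i) * (- eff (sm (T i))) \<le> 2 * int (length (proj (cap i))) + 2 * lcm (- eff (sm (T i))) (eff (sp (S i)))"
  using gd[of i] unfolding good_decomp_def Let_def by (simp add: plen_def proj_def lcm.commute)

lemma Ble: assumes "i \<in> N" shows "- eff (sm (T i)) \<le> int (card (T i))"
proof -
  have "set (sm (T i)) \<subseteq> Tp" using sigm[OF assms] by (simp add: simple_cycle_def is_cycle_def)
  then have "\<bar>eff (sm (T i))\<bar> \<le> int (length (sm (T i)))" by (rule eff_le_len[OF bnd])
  then show ?thesis using lenm[OF assms] by linarith
qed
lemma Ale: assumes "i \<in> N" shows "eff (sp (S i)) \<le> int (card (S i))"
proof -
  have "set (sp (S i)) \<subseteq> Tp" using sigp[OF assms] by (simp add: simple_cycle_def is_cycle_def)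
  then have "\<bar>eff (sp (S i))\<bar> \<le> int (length (sp (S i)))" by (rule eff_le_len[OF bnd])
  then show ?thesis using lenp[OF assms] by linarith
qed

lemma count_ST:
  assumes "i0 \<in> N" "S i0 = s" "T i0 = t"
  shows "card {i \<in> N. S i = s \<and> T i = t} \<le> nat (gcd (eff (sp s)) (- eff (sm t)))"
proof -
  define I where "I = {i \<in> N. S i = s \<and> T i = t}"
  define g where "g = gcd (eff (sp s)) (- eff (sm t))"
  have g0: "g > 0" unfolding g_def using sigp[OF assms(1)] assms by simp
  define f where "f = (\<lambda>i. int (snd (psrc (cap i))) mod g)"
  have inj: "inj_on f I"
  proof (rule inj_onI)
    fix i j assume i: "i \<in> I" and j: "j \<in> I" and e: "f i = f j"
    have iN: "i \<in> N" "S i = s" "T i = t" and jN: "j \<in> N" "S j = s" "T j = t" using i j I_def by auto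
    have pe: "fst (psrc (cap i)) = fst (psrc (cap j))" using bases[OF iN(1)] bases[OF jN(1)] iN jN by simp
    have d: "g dvd int (snd (psrc (cap i))) - int (snd (psrc (cap j)))" using e unfolding f_def by (simp add: mod_eq_dvd_iff)
    show "i = j"
    proof (rule ccontr)
      assume "i \<noteq> j"
      then consider "i < j" | "j < i" by linarith
      then show False
      proof cases
        case 1
        have dv: "gcd (eff (sp (S i))) (- eff (sm (T j))) dvd
            (int (snd (psrc (cap i))) + eff (take 0 (proj (cap i))) - (int (snd (psrc (cap j))) + eff (take 0 (proj (cap j)))))"
          using d iN jN unfolding g_def by simp
        show False by (rule no_short[OF iN(1) jN(1) 1 _ _ _ dv]) (use pe in simp_all)
      next
        case 2
        have dv: "gcd (eff (sp (S j))) (- eff (sm (T i))) dvd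
            (int (snd (psrc (cap j))) + eff (take 0 (proj (cap j))) - (int (snd (psrc (cap i))) + eff (take 0 (proj (cap i)))))"
          using d iN jN unfolding g_def by (simp add: dvd_diff_commute)
        show False by (rule no_short[OF jN(1) iN(1) 2 _ _ _ dv]) (use pe in simp_all)
      qed
    qed
  qed
  have "f ` I \<subseteq> {0..<g}" unfolding f_def using g0 by auto
  then have "card (f ` I) \<le> card {0..<g}" by (intro card_mono) auto
  moreover have "card (f ` I) = card I" using inj by (rule card_image)
  moreover have "card {0..<g} = nat g" by simp
  ultimately show ?thesis unfolding I_def g_def by simp
qed

end



lemma len_rep: "length (concat (replicate m xs)) = m * length xs"
  by (induction m) auto

context L7
begin

lemma plen_up: assumes "i \<in> N" shows "plen (up i) = a i * length (sp (S i))"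
proof -
  have "proj (up i) = concat (replicate (a i) (sp (S i)))" using nd[OF assms] unfolding normal_decomp_def by blast
  then have "length (proj (up i)) = a i * length (sp (S i))" by (simp add: len_rep)
  then show ?thesis by (simp add: plen_def proj_def)
qed
lemma plen_down: assumes "i \<in> N" shows "plen (down i) = b i * length (sm (T i))"
proof -
  have "proj (down i) = concat (replicate (b i) (sm (T i)))" using nd[OF assms] unfolding normal_decomp_def by blast
  then have "length (proj (down i)) = b i * length (sm (T i))" by (simp add: len_rep)
  then show ?thesis by (simp add: plen_def proj_def)
qed

lemma up_S: assumes s: "s \<in> S ` N" shows "(\<Sum>i\<in>{x \<in> N. S x = s}. a i) \<le> 4 * card Q"
proof -
  define I where "I = {x \<in> N. S x = s}"
  obtain i0 where i0: "i0 \<in> N" "S i0 = s" using s by auto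
  have A: "eff (sp s) > 0" using sigp[OF i0(1)] i0 by simp
  have IN: "I \<subseteq> N" unfolding I_def by auto
  have finI: "finite I" using IN finN finite_subset by auto
  have "(\<Sum>i\<in>I. a i) \<le> 4 * card Q"
  proof (rule abstract_bound[where G = T and Bf = "\<lambda>t. - eff (sm t)" and len = "\<lambda>i. length (proj (cap i))", OF finI A])
    fix i assume "i \<in> I"
    then have "i \<in> N" "S i = s" unfolding I_def by auto
    then show "int (a i) * eff (sp s) \<le> 2 * int (length (proj (cap i))) + 2 * lcm (eff (sp s)) (- eff (sm (T i)))"
      using per_up by auto
  next
    show "(\<Sum>i\<in>I. length (proj (cap i))) \<le> card Q * nat (eff (sp s))"
    proof (rule pigeon_gen[OF IN A])
      fix i j d assume "i \<in> I" "eff (sp s) dvd d"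
      then show "gcd (eff (sp (S i))) (- eff (sm (T j))) dvd d" unfolding I_def
        using dvd_trans[OF gcd_dvd1] by auto
    next
      fix i d assume "i \<in> I" "eff (sp s) dvd d"
      then show "gcd (eff (sp (S i))) (- eff (sm (T i))) dvd d" unfolding I_def
        using dvd_trans[OF gcd_dvd1] by auto
    qed
  next
    fix t assume "t \<in> T ` I"
    then obtain j where j: "j \<in> N" "S j = s" "T j = t" unfolding I_def by auto
    have "{i \<in> I. T i = t} = {i \<in> N. S i = s \<and> T i = t}" unfolding I_def by auto
    then have "card {i \<in> I. T i = t} \<le> nat (gcd (eff (sp s)) (- eff (sm t)))" using count_ST[OF j] by simp
    moreover have "0 < - eff (sm t)" using sigm[OF j(1)] j by simp
    moreover have "- eff (sm t) \<le> int (card t)" using Ble[OF j(1)] j by simp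
    ultimately show "card {i \<in> I. T i = t} \<le> nat (gcd (eff (sp s)) (- eff (sm t))) \<and> 0 < - eff (sm t) \<and> - eff (sm t) \<le> int (card t)"
      by simp
  next
    have "T ` I \<subseteq> SCCs Q Tp" using SinSCC IN by auto
    then show "(\<Sum>t\<in>T ` I. card t) \<le> card Q" using sum_SCC finI by auto
  qed
  then show ?thesis unfolding I_def .
qed

lemma down_T: assumes t: "t \<in> T ` N" shows "(\<Sum>i\<in>{x \<in> N. T x = t}. b i) \<le> 4 * card Q"
proof -
  define I where "I = {x \<in> N. T x = t}"
  obtain i0 where i0: "i0 \<in> N" "T i0 = t" using t by auto
  have B: "- eff (sm t) > 0" using sigm[OF i0(1)] i0 by simp
  have IN: "I \<subseteq> N" unfolding I_def by auto
  have finI: "finite I" using IN finN finite_subset by auto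
  have "(\<Sum>i\<in>I. b i) \<le> 4 * card Q"
  proof (rule abstract_bound[where G = S and Bf = "\<lambda>s. eff (sp s)" and len = "\<lambda>i. length (proj (cap i))", OF finI B])
    fix i assume "i \<in> I"
    then have "i \<in> N" "T i = t" unfolding I_def by auto
    then show "int (b i) * - eff (sm t) \<le> 2 * int (length (proj (cap i))) + 2 * lcm (- eff (sm t)) (eff (sp (S i)))"
      using per_down by auto
  next
    show "(\<Sum>i\<in>I. length (proj (cap i))) \<le> card Q * nat (- eff (sm t))"
    proof (rule pigeon_gen[OF IN B])
      fix i j d assume "j \<in> I" "- eff (sm t) dvd d"
      then show "gcd (eff (sp (S i))) (- eff (sm (T j))) dvd d" unfolding I_def
        using dvd_trans[OF gcd_dvd2] by auto
    next
      fix i d assume "i \<in> I" "- eff (sm t) dvd d"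
      then show "gcd (eff (sp (S i))) (- eff (sm (T i))) dvd d" unfolding I_def
        using dvd_trans[OF gcd_dvd2] by auto
    qed
  next
    fix s assume "s \<in> S ` I"
    then obtain j where j: "j \<in> N" "S j = s" "T j = t" unfolding I_def by auto
    have "{i \<in> I. S i = s} = {i \<in> N. S i = s \<and> T i = t}" unfolding I_def by auto
    then have "card {i \<in> I. S i = s} \<le> nat (gcd (- eff (sm t)) (eff (sp s)))" using count_ST[OF j] by (simp add: gcd.commute)
    moreover have "0 < eff (sp s)" using sigp[OF j(1)] j by simp
    moreover have "eff (sp s) \<le> int (card s)" using Ale[OF j(1)] j by simp
    ultimately show "card {i \<in> I. S i = s} \<le> nat (gcd (- eff (sm t)) (eff (sp s))) \<and> 0 < eff (sp s) \<and> eff (sp s) \<le> int (card s)"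
      by simp
  next
    have "S ` I \<subseteq> SCCs Q Tp" using SinSCC IN by auto
    then show "(\<Sum>s\<in>S ` I. card s) \<le> card Q" using sum_SCC finI by auto
  qed
  then show ?thesis unfolding I_def .
qed

lemma final_up: "(\<Sum>i\<in>N. plen (up i)) \<le> 4 * (card Q)^2"
proof -
  have "(\<Sum>i\<in>N. plen (up i)) \<le> (\<Sum>i\<in>N. a i * card (S i))"
    by (rule sum_mono) (simp add: plen_up lenp)
  also have "\<dots> = (\<Sum>s\<in>S ` N. \<Sum>i\<in>{x \<in> N. S x = s}. a i * card (S i))"
    using finN by (rule sum.image_gen)
  also have "\<dots> = (\<Sum>s\<in>S ` N. card s * (\<Sum>i\<in>{x \<in> N. S x = s}. a i))"
    by (rule sum.cong) (auto simp: sum_distrib_left mult.commute)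
  also have "\<dots> \<le> (\<Sum>s\<in>S ` N. card s * (4 * card Q))"
    by (rule sum_mono) (use up_S in simp)
  also have "\<dots> = (\<Sum>s\<in>S ` N. card s) * (4 * card Q)" by (simp add: sum_distrib_right)
  also have "\<dots> \<le> card Q * (4 * card Q)"
  proof (rule mult_right_mono)
    have "S ` N \<subseteq> SCCs Q Tp" using SinSCC by auto
    then show "(\<Sum>s\<in>S ` N. card s) \<le> card Q" using sum_SCC finN by auto
  qed simp
  finally show ?thesis by (simp add: power2_eq_square)
qed

lemma final_down: "(\<Sum>i\<in>N. plen (down i)) \<le> 4 * (card Q)^2"
proof -
  have "(\<Sum>i\<in>N. plen (down i)) \<le> (\<Sum>i\<in>N. b i * card (T i))"
    by (rule sum_mono) (simp add: plen_down lenm)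
  also have "\<dots> = (\<Sum>t\<in>T ` N. \<Sum>i\<in>{x \<in> N. T x = t}. b i * card (T i))"
    using finN by (rule sum.image_gen)
  also have "\<dots> = (\<Sum>t\<in>T ` N. card t * (\<Sum>i\<in>{x \<in> N. T x = t}. b i))"
    by (rule sum.cong) (auto simp: sum_distrib_left mult.commute)
  also have "\<dots> \<le> (\<Sum>t\<in>T ` N. card t * (4 * card Q))"
    by (rule sum_mono) (use down_T in simp)
  also have "\<dots> = (\<Sum>t\<in>T ` N. card t) * (4 * card Q)" by (simp add: sum_distrib_right)
  also have "\<dots> \<le> card Q * (4 * card Q)"
  proof (rule mult_right_mono)
    have "T ` N \<subseteq> SCCs Q Tp" using SinSCC by auto
    then show "(\<Sum>t\<in>T ` N. card t) \<le> card Q" using sum_SCC finN by auto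
  qed simp
  finally show ?thesis by (simp add: power2_eq_square)
qed

end

theorem lemma7:
  fixes Q :: "'q set" and Tp Tz :: "'q trans set"
    and sp sm :: "'q set \<Rightarrow> 'q trans list"
    and \<alpha> \<beta> :: "'q conf" and rs :: "'q path list"
    and L N :: "nat set"
    and S T :: "nat \<Rightarrow> 'q set"
    and pre up cap down suf :: "nat \<Rightarrow> 'q path"
    and a b :: "nat \<Rightarrow> nat"
  assumes "ocs Q Tp Tz"
    and "sigma_ok Q Tp sp sm"
    and "snd \<alpha> = 0" and "snd \<beta> = 0"
    and arcs: "\<forall>i < length rs. is_arc Tp Tz (rs ! i)"
    and chain: "\<forall>i. Suc i < length rs \<longrightarrow> ptgt (rs ! i) = psrc (rs ! Suc i)"
    and ends: "if rs = [] then \<alpha> = \<beta> else psrc (hd rs) = \<alpha> \<and> ptgt (last rs) = \<beta>"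
    and minimal: "\<forall>\<rho>'. is_path Tp Tz \<rho>' \<and> psrc \<rho>' = \<alpha> \<and> ptgt \<rho>' = \<beta> \<longrightarrow>
                    zeros (\<alpha>, concat (map snd rs)) \<le> zeros \<rho>'"
    and part: "L \<inter> N = {}" "L \<union> N = {..<length rs}"
    and lowarcs: "\<forall>i \<in> L. low Q (rs ! i) \<and>
                    (\<forall>\<rho>'. is_arc Tp Tz \<rho>' \<and> low Q \<rho>' \<and> psrc \<rho>' = psrc (rs ! i) \<and> ptgt \<rho>' = ptgt (rs ! i)
                          \<longrightarrow> plen (rs ! i) \<le> plen \<rho>')"
    and normal: "\<forall>i \<in> N. good_decomp Q Tp Tz sp sm (S i) (T i) (rs ! i)
                    (pre i) (up i) (cap i) (down i) (suf i) (a i) (b i)"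
  shows "(\<Sum>i\<in>N. plen (up i)) \<le> 4 * (card Q)^2 \<and> (\<Sum>i\<in>N. plen (down i)) \<le> 4 * (card Q)^2"
proof -
  interpret L7 Q Tp Tz sp sm \<alpha> \<beta> rs L N S T pre up cap down suf a b
    using assms by (unfold_locales) blast+
  show ?thesis using final_up final_down by simp
qed

end
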